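(* Let $1\le l\le g$, $\beta\in\mathbb F_p^\times$ and $\alpha=\beta^2$. Then the sequence of polynomial functions $$J^{l,s}(x_1,\dots,x_{n-1})=x_1^{(p^s-1)/2}\,Q^{l,s}(x_2,\dots,x_{n-1}),\qquad s=1,2,\dots,$$ converges uniformly on $D_{\alpha,1}\times D_{0,1}^{n-2}$ to the function $\omega(\beta)\,J^l$, where $J^l(x_1,\dots,x_{n-1})=x_1^{-1/2}\,Q^l(x_2,\dots,x_{n-1})$.
   Context: Let $p$ be an odd prime, $g\ge1$, $n=2g+1$, $p>n$. $\mathbb Z_p$, $|\cdot|_p$ as usual. For $t\in\mathbb F_p$ (or $\mathbb Z_p$), $\omega(t)$ is the Teichmüller representative: the unique $\omega\in\mathbb Z_p$ with $\omega^p=\omega$, $\omega\equiv t\pmod p$. For $\gamma\in\mathbb F_p$, $D_{\gamma,1}=\{t\in\mathbb Z_p:|t-\omega(\gamma)|_p<1\}$. For $\beta\neq0$, $x_1^{1/2}:D_{\alpha,1}\to D_{\beta,1}$ denotes the inverse of the bijection $t\mapsto t^2$, $D_{\beta,1}\to D_{\alpha,1}$, and $x_1^{-1/2}=1/x_1^{1/2}$. Uniform convergence on $S$ means convergence in $\sup_S|\cdot|_p$ (coordinatewise). Binomials $\binom{y}{k}=y(y-1)\cdots(y-k+1)/k!$. For $a=(a_1,\dots,a_{n-1})$ write $X(a)=\prod_{i=2}^{n-2l}x_i^{a_{i-1}}\prod_{i=n-2l+1}^{n-1}x_i^{a_i}$. For a parameter $\mu$ define $Q^{l}[\mu]=(Q_1,\dots,Q_n)$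 by: for $1\le j\le n-2l-1$: $Q_j=x_{j+1}\sum\binom{\mu-1}{a_j}\prod_{i\ne j}\binom{\mu}{a_i}X(a)$ over $a$ with $a_1+\dots+a_{n-2l}=a_{n-2l+1}+\dots+a_{n-1}+l-1$; for $j=n-2l$: $Q_j=\sum\binom{\mu-1}{a_j}\prod_{i\ne j}\binom{\mu}{a_i}X(a)$ with the same condition ($l-1$); for $n-2l<j\le n-1$: $Q_j=\sum\binom{\mu-1}{a_j}\prod_{i\ne j}\binom{\mu}{a_i}X(a)$ over $a$ with $a_1+\dots+a_{n-2l}=a_{n-2l+1}+\dots+a_{n-1}+l$; $Q_n=\sum\prod_{i=1}^{n-1}\binom{\mu}{a_i}X(a)$ over $a$ with $a_1+\dots+a_{n-2l}=a_{n-2l+1}+\dots+a_{n-1}+l$. Here $\prod_{i\ne j}$ is over $i\in\{1,\dots,n-1\}\setminus\{j\}$. $Q^l$ is the formal power series $Q^l[-\tfrac12]$ (sum over all $a\in\mathbb Z_{\ge0}^{n-1}$; it has $p$-adic integer coefficients and converges on $D_{0,1}^{n-2}$), and $Q^{l,s}$ is the polynomial $Q^l[\tfrac{p^s-1}2]$ (sum over $a$ with $0\le a_i\le\frac{p^s-1}2$). *)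

theory Defs
  imports Complex_Main "HOL-Computational_Algebra.Primes" "HOL-Number_Theory.Cong"
begin

text \<open>An element x of Z_p is represented by the sequence of its residues:
 x k is the representative in [0, p^k) of x modulo p^k.\<close>

definition Zp :: "int \<Rightarrow> (nat \<Rightarrow> int) set" where
  "Zp p = {x. \<forall>k. 0 \<le> x k \<and> x k < p ^ k \<and> x (Suc k) mod p ^ k = x k}"

definition zp_of_int :: "int \<Rightarrow> int \<Rightarrow> nat \<Rightarrow> int" where
  "zp_of_int p c = (\<lambda>k. c mod p ^ k)"

text \<open>Embedding of p-integral rationals (denominator prime to p) into Z_p.\<close>
definition zp_of_rat :: "int \<Rightarrow> rat \<Rightarrow> nat \<Rightarrow> int" where
  "zp_of_rat p r = (\<lambda>k. THE c. 0 \<le> c \<and> c < p ^ k \<and>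
      [c * snd (quotient_of r) = fst (quotient_of r)] (mod p ^ k))"

definition zp_add :: "int \<Rightarrow> (nat \<Rightarrow> int) \<Rightarrow> (nat \<Rightarrow> int) \<Rightarrow> nat \<Rightarrow> int" where
  "zp_add p x y = (\<lambda>k. (x k + y k) mod p ^ k)"

definition zp_diff :: "int \<Rightarrow> (nat \<Rightarrow> int) \<Rightarrow> (nat \<Rightarrow> int) \<Rightarrow> nat \<Rightarrow> int" where
  "zp_diff p x y = (\<lambda>k. (x k - y k) mod p ^ k)"

definition zp_mult :: "int \<Rightarrow> (nat \<Rightarrow> int) \<Rightarrow> (nat \<Rightarrow> int) \<Rightarrow> nat \<Rightarrow> int" where
  "zp_mult p x y = (\<lambda>k. (x k * y k) mod p ^ k)"

definition zp_pow :: "int \<Rightarrow> (nat \<Rightarrow> int) \<Rightarrow> nat \<Rightarrow> nat \<Rightarrow> int" where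
  "zp_pow p x m = (\<lambda>k. (x k ^ m) mod p ^ k)"

definition zp_prod :: "int \<Rightarrow> ('a \<Rightarrow> nat \<Rightarrow> int) \<Rightarrow> 'a set \<Rightarrow> nat \<Rightarrow> int" where
  "zp_prod p f I = (\<lambda>k. (\<Prod>i\<in>I. f i k) mod p ^ k)"

text \<open>p-adic (unconditional) sum of a family tending to 0: at level k only
 finitely many terms are nonzero modulo p^k, and we add those.  For a finite
 index set this is the ordinary finite sum in Z_p.\<close>
definition zp_sum :: "int \<Rightarrow> ('a \<Rightarrow> nat \<Rightarrow> int) \<Rightarrow> 'a set \<Rightarrow> nat \<Rightarrow> int" where
  "zp_sum p f A = (\<lambda>k. (\<Sum>a\<in>{a\<in>A. f a k mod p ^ k \<noteq> 0}. f a k) mod p ^ k)"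

definition zp_inv :: "int \<Rightarrow> (nat \<Rightarrow> int) \<Rightarrow> nat \<Rightarrow> int" where
  "zp_inv p x = (THE y. y \<in> Zp p \<and> zp_mult p x y = zp_of_int p 1)"

text \<open>p-adic absolute value |x|_p = p^(-v(x)), v(x) the p-adic valuation.\<close>
definition zp_abs :: "int \<Rightarrow> (nat \<Rightarrow> int) \<Rightarrow> real" where
  "zp_abs p x = (if \<forall>k. x k = 0 then 0
                 else 1 / (real_of_int p ^ (LEAST k. x (Suc k) \<noteq> 0)))"

definition teich :: "int \<Rightarrow> int \<Rightarrow> nat \<Rightarrow> int" where
  "teich p t = (THE w. w \<in> Zp p \<and> zp_pow p w (nat p) = w \<and> w 1 = t mod p)"

definition Ddisc :: "int \<Rightarrow> int \<Rightarrow> (nat \<Rightarrow> int) set" where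
  "Ddisc p \<gamma> = {t \<in> Zp p. zp_abs p (zp_diff p t (teich p \<gamma>)) < 1}"

definition zp_sqrt :: "int \<Rightarrow> int \<Rightarrow> (nat \<Rightarrow> int) \<Rightarrow> nat \<Rightarrow> int" where
  "zp_sqrt p \<beta> x = (THE y. y \<in> Ddisc p \<beta> \<and> zp_mult p y y = x)"

text \<open>Multi-indices a = (a_1,...,a_{n-1}) are functions nat => nat vanishing
 outside {1..n-1}; points (x_1,...,x_{n-1}) are functions from indices to Z_p.\<close>

definition Xmon :: "int \<Rightarrow> nat \<Rightarrow> nat \<Rightarrow> (nat \<Rightarrow> nat) \<Rightarrow> (nat \<Rightarrow> nat \<Rightarrow> int) \<Rightarrow> nat \<Rightarrow> int" where
  "Xmon p n l a x = zp_mult p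
      (zp_prod p (\<lambda>i. zp_pow p (x i) (a (i - 1))) {2..n - 2*l})
      (zp_prod p (\<lambda>i. zp_pow p (x i) (a i)) {n - 2*l + 1..n - 1})"

definition Qcoef :: "nat \<Rightarrow> rat \<Rightarrow> nat \<Rightarrow> (nat \<Rightarrow> nat) \<Rightarrow> rat" where
  "Qcoef n \<mu> j a = (if j \<le> n - 1
      then ((\<mu> - 1) gchoose a j) * (\<Prod>i\<in>{1..n - 1} - {j}. \<mu> gchoose a i)
      else (\<Prod>i\<in>{1..n - 1}. \<mu> gchoose a i))"

definition Qidx :: "nat \<Rightarrow> nat \<Rightarrow> nat \<Rightarrow> (nat \<Rightarrow> nat) set" where
  "Qidx n l j = {a. (\<forall>i. i \<notin> {1..n - 1} \<longrightarrow> a i = 0) \<and>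
      (\<Sum>i=1..n - 2*l. a i) = (\<Sum>i=n - 2*l + 1..n - 1. a i) + (if j \<le> n - 2*l then l - 1 else l)}"

definition Qcomp :: "int \<Rightarrow> nat \<Rightarrow> nat \<Rightarrow> rat \<Rightarrow> (nat \<Rightarrow> nat) set \<Rightarrow> nat
                      \<Rightarrow> (nat \<Rightarrow> nat \<Rightarrow> int) \<Rightarrow> nat \<Rightarrow> int" where
  "Qcomp p n l \<mu> A j x = zp_mult p
      (if 1 \<le> j \<and> j \<le> n - 2*l - 1 then x (j + 1) else zp_of_int p 1)
      (zp_sum p (\<lambda>a. zp_mult p (zp_of_rat p (Qcoef n \<mu> j a)) (Xmon p n l a x))
                 (Qidx n l j \<inter> A))"

definition Ql :: "int \<Rightarrow> nat \<Rightarrow> nat \<Rightarrow> nat \<Rightarrow> (nat \<Rightarrow> nat \<Rightarrow> int) \<Rightarrow> nat \<Rightarrow> int" where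
  "Ql p n l j x = Qcomp p n l (- 1/2) UNIV j x"

definition Qls :: "int \<Rightarrow> nat \<Rightarrow> nat \<Rightarrow> nat \<Rightarrow> nat \<Rightarrow> (nat \<Rightarrow> nat \<Rightarrow> int) \<Rightarrow> nat \<Rightarrow> int" where
  "Qls p n l s j x = Qcomp p n l (of_int ((p ^ s - 1) div 2))
       {a. \<forall>i. a i \<le> nat ((p ^ s - 1) div 2)} j x"

definition Jls :: "int \<Rightarrow> nat \<Rightarrow> nat \<Rightarrow> nat \<Rightarrow> nat \<Rightarrow> (nat \<Rightarrow> nat \<Rightarrow> int) \<Rightarrow> nat \<Rightarrow> int" where
  "Jls p n l s j x = zp_mult p (zp_pow p (x 1) (nat ((p ^ s - 1) div 2))) (Qls p n l s j x)"

definition Jl :: "int \<Rightarrow> int \<Rightarrow> nat \<Rightarrow> nat \<Rightarrow> nat \<Rightarrow> (nat \<Rightarrow> nat \<Rightarrow> int) \<Rightarrow> nat \<Rightarrow> int" where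
  "Jl p \<beta> n l j x = zp_mult p (zp_inv p (zp_sqrt p \<beta> (x 1))) (Ql p n l j x)"

definition zp_unif_conv :: "int \<Rightarrow> (nat \<Rightarrow> 'a \<Rightarrow> nat \<Rightarrow> int) \<Rightarrow> ('a \<Rightarrow> nat \<Rightarrow> int) \<Rightarrow> 'a set \<Rightarrow> bool" where
  "zp_unif_conv p F f S = (\<forall>\<epsilon>>0. \<exists>N. \<forall>s\<ge>N. \<forall>x\<in>S. zp_abs p (zp_diff p (F s x) (f x)) < \<epsilon>)"

end

theory Submission
  imports Defs "HOL-Number_Theory.Number_Theory"
begin

lemma fermat_int:
  fixes p a :: int assumes "prime p"
  shows "[a ^ nat p = a] (mod p)"
proof -
  have p1: "p > 1" using assms prime_gt_1_int by blast
  define b where "b = nat (a mod p)"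
  have ab: "[a = int b] (mod p)" using p1 unfolding b_def cong_def by simp
  have pn: "prime (nat p)" using assms by simp
  have "[int b ^ nat p = int b] (mod p)"
  proof (cases "b = 0")
    case True then show ?thesis using p1 by (simp add: cong_def power_0_left)
  next
    case False
    have "b < nat p" using p1 unfolding b_def by auto
    then have "\<not> nat p dvd b" using False by (auto dest: dvd_imp_le)
    then have "[b ^ (nat p - 1) = 1] (mod nat p)" using fermat_theorem pn by blast
    then have "[b ^ (nat p - 1) * b = 1 * b] (mod nat p)" by (rule cong_scalar_right)
    moreover have "b ^ (nat p - 1) * b = b ^ nat p"
    proof -
      have "nat p = Suc (nat p - 1)" using p1 by simp
      then show ?thesis by (metis power_Suc2)
    qed
    ultimately have "[b ^ nat p = b] (mod nat p)" by simp
    then have "[int (b ^ nat p) = int b] (mod int (nat p))" using cong_int_iff by blast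
    then show ?thesis using p1 by simp
  qed
  moreover have "[a ^ nat p = int b ^ nat p] (mod p)" using ab by (rule cong_pow)
  ultimately show ?thesis using ab by (meson cong_trans cong_sym)
qed

lemma Zp_range: "x \<in> Zp p \<Longrightarrow> 0 \<le> x k \<and> x k < p ^ k"
  unfolding Zp_def by auto

lemma Zp_mod:
  assumes "x \<in> Zp p" "p > 0" "j \<le> k"
  shows "x k mod p ^ j = x j"
proof -
  obtain d where k: "k = j + d" using assms(3) le_Suc_ex by blast
  have "x (j + d) mod p ^ j = x j" for d
  proof (induction d)
    case 0
    then show ?case using Zp_range[OF assms(1)] by simp
  next
    case (Suc d)
    have "x (Suc (j + d)) mod p ^ (j + d) = x (j + d)" using assms(1) unfolding Zp_def by auto
    moreover have "p ^ j dvd p ^ (j + d)" by (simp add: le_imp_power_dvd)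
    ultimately have "x (Suc (j + d)) mod p ^ j = x (j + d) mod p ^ j"
      by (metis mod_mod_cancel)
    then show ?case using Suc by simp
  qed
  then show ?thesis using k by simp
qed

lemma Zp_cong_p:
  assumes "x \<in> Zp p" "p > 0" "k \<ge> 1"
  shows "[x k = x 1] (mod p)"
proof -
  have a: "x k mod p = x 1" using Zp_mod[OF assms(1,2), of 1 k] assms(3) by simp
  have b: "x 1 mod p = x 1" using Zp_range[OF assms(1), of 1] by simp
  show ?thesis using a b unfolding cong_def by simp
qed

lemma pow_step:
  fixes a b p :: int assumes "prime p" "[a = b] (mod p ^ Suc j)"
  shows "[a ^ nat p = b ^ nat p] (mod p ^ Suc (Suc j))"
proof -
  have p1: "p > 1" using assms prime_gt_1_int by blast
  define m where "m = nat p - 1"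
  have m: "nat p = Suc m" using p1 unfolding m_def by simp
  have d: "a ^ nat p - b ^ nat p = (a - b) * (\<Sum>i<Suc m. a ^ i * b ^ (m - i))"
    unfolding m by (rule diff_power_eq_sum)
  have "p dvd p ^ Suc j" by simp
  then have ab: "[a = b] (mod p)" using assms(2) cong_dvd_modulus by blast
  have c1: "[(\<Sum>i<Suc m. a ^ i * b ^ (m - i)) = (\<Sum>i<Suc m. b ^ i * b ^ (m - i))] (mod p)"
    by (rule cong_sum, rule cong_scalar_right, rule cong_pow, rule ab)
  have c2: "(\<Sum>i<Suc m. b ^ i * b ^ (m - i)) = (\<Sum>i<Suc m. b ^ m)"
    by (rule sum.cong) (auto simp: power_add[symmetric])
  have c3: "(\<Sum>i<Suc m. b ^ m) = p * b ^ m"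
  proof -
    have "(\<Sum>i<Suc m. b ^ m) = int (Suc m) * b ^ m" by simp
    moreover have "int (Suc m) = int (nat p)" using m by simp
    moreover have "int (nat p) = p" using p1 by simp
    ultimately show ?thesis by simp
  qed
  have c: "[(\<Sum>i<Suc m. a ^ i * b ^ (m - i)) = p * b ^ m] (mod p)"
    using c1 unfolding c2 c3 .
  have f1: "p dvd (\<Sum>i<Suc m. a ^ i * b ^ (m - i))"
    using cong_dvd_iff[OF c] by simp
  have f2: "p ^ Suc j dvd (a - b)" using assms(2) cong_iff_dvd_diff by blast
  have "p ^ Suc j * p dvd (a - b) * (\<Sum>i<Suc m. a ^ i * b ^ (m - i))"
    by (rule mult_dvd_mono[OF f2 f1])
  then have "p ^ Suc (Suc j) dvd a ^ nat p - b ^ nat p" using d by (simp add: mult.commute)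
  then show ?thesis using cong_iff_dvd_diff by blast
qed

lemma pow_lift:
  fixes a b p :: int assumes "prime p" "[a = b] (mod p)"
  shows "[a ^ (nat p ^ m) = b ^ (nat p ^ m)] (mod p ^ Suc m)"
proof (induction m)
  case 0
  then show ?case using assms(2) by simp
next
  case (Suc m)
  have "[(a ^ (nat p ^ m)) ^ nat p = (b ^ (nat p ^ m)) ^ nat p] (mod p ^ Suc (Suc m))"
    using pow_step[OF assms(1) Suc] .
  then show ?case by (simp add: power_mult[symmetric] mult.commute)
qed

definition teichf :: "int \<Rightarrow> int \<Rightarrow> nat \<Rightarrow> int" where
  "teichf p t = (\<lambda>k. t ^ (nat p ^ k) mod p ^ k)"

lemma teich_iter:
  fixes p t :: int assumes "prime p"
  shows "[t ^ (nat p ^ Suc k) = t ^ (nat p ^ k)] (mod p ^ Suc k)"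
proof -
  have "[(t ^ nat p) ^ (nat p ^ k) = t ^ (nat p ^ k)] (mod p ^ Suc k)"
    by (rule pow_lift[OF assms fermat_int[OF assms]])
  then show ?thesis by (simp add: power_mult[symmetric] mult.commute)
qed

lemma teich_iter2:
  fixes p t :: int assumes "prime p" "k \<le> s"
  shows "[t ^ (nat p ^ s) = t ^ (nat p ^ k)] (mod p ^ Suc k)"
  using assms(2)
proof (induction s rule: dec_induct)
  case base
  then show ?case by simp
next
  case (step s)
  have "[t ^ (nat p ^ Suc s) = t ^ (nat p ^ s)] (mod p ^ Suc s)" by (rule teich_iter[OF assms(1)])
  then have "[t ^ (nat p ^ Suc s) = t ^ (nat p ^ s)] (mod p ^ Suc k)"
    by (rule cong_dvd_modulus) (simp add: le_imp_power_dvd step.hyps)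
  then show ?case using step.IH by (meson cong_trans)
qed

lemma teichf_prop:
  fixes p t :: int assumes "prime p"
  shows "teichf p t \<in> Zp p \<and> zp_pow p (teichf p t) (nat p) = teichf p t \<and> teichf p t 1 = t mod p"
proof -
  have p1: "p > 1" using assms prime_gt_1_int by blast
  have "teichf p t (Suc k) mod p ^ k = teichf p t k" for k
  proof -
    have "[t ^ (nat p ^ Suc k) = t ^ (nat p ^ k)] (mod p ^ k)"
      by (rule cong_dvd_modulus[OF teich_iter[OF assms]]) (simp add: le_imp_power_dvd)
    moreover have "p ^ k dvd p ^ Suc k" by (simp add: le_imp_power_dvd)
    ultimately show ?thesis unfolding teichf_def cong_def by (simp add: mod_mod_cancel)
  qed
  then have Z: "teichf p t \<in> Zp p" using p1 unfolding Zp_def teichf_def by auto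
  have "zp_pow p (teichf p t) (nat p) k = teichf p t k" for k
  proof -
    have "[(t ^ (nat p ^ k) mod p ^ k) ^ nat p = t ^ (nat p ^ Suc k)] (mod p ^ k)"
      by (simp add: cong_def power_mod power_mult[symmetric] mult.commute)
    moreover have "[t ^ (nat p ^ Suc k) = t ^ (nat p ^ k)] (mod p ^ k)"
      by (rule cong_dvd_modulus[OF teich_iter[OF assms]]) (simp add: le_imp_power_dvd)
    ultimately show ?thesis unfolding zp_pow_def teichf_def cong_def by simp
  qed
  moreover have "teichf p t 1 = t mod p" using fermat_int[OF assms, of t]
    unfolding teichf_def cong_def by simp
  ultimately show ?thesis using Z by auto
qed

lemma teichf_unique:
  fixes p t :: int assumes "prime p" "w \<in> Zp p" "zp_pow p w (nat p) = w" "w 1 = t mod p"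
  shows "w = teichf p t"
proof
  fix k
  have p1: "p > 1" using assms prime_gt_1_int by blast
  show "w k = teichf p t k"
  proof (cases "k = 0")
    case True
    then show ?thesis using Zp_range[OF assms(2), of 0] unfolding teichf_def by simp
  next
    case False
    have "(w k ^ nat p) mod p ^ k = w k"
      using fun_cong[OF assms(3), of k] unfolding zp_pow_def by simp
    moreover have "w k mod p ^ k = w k" using Zp_range[OF assms(2), of k] by simp
    ultimately have wp: "[w k ^ nat p = w k] (mod p ^ k)" unfolding cong_def by simp
    have it: "[w k ^ (nat p ^ m) = w k] (mod p ^ k)" for m
    proof (induction m)
      case 0 then show ?case by simp
    next
      case (Suc m)
      have "w k ^ (nat p ^ Suc m) = (w k ^ (nat p ^ m)) ^ nat p"
        by (simp add: power_mult[symmetric] mult.commute)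
      moreover have "[(w k ^ (nat p ^ m)) ^ nat p = w k ^ nat p] (mod p ^ k)"
        using Suc by (rule cong_pow)
      ultimately show ?case using wp by (metis cong_trans)
    qed
    have "[w k = t] (mod p)"
      using Zp_cong_p[OF assms(2), of k] False p1 assms(4) unfolding cong_def by simp
    then have "[w k ^ (nat p ^ k) = t ^ (nat p ^ k)] (mod p ^ Suc k)" by (rule pow_lift[OF assms(1)])
    then have "[w k ^ (nat p ^ k) = t ^ (nat p ^ k)] (mod p ^ k)"
      by (rule cong_dvd_modulus) (simp add: le_imp_power_dvd)
    then have "[w k = t ^ (nat p ^ k)] (mod p ^ k)" using it by (meson cong_sym cong_trans)
    then show ?thesis unfolding teichf_def cong_def using Zp_range[OF assms(2), of k]
      by simp
  qed
qed

lemma teich_eq: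
  fixes p t :: int assumes "prime p"
  shows "teich p t = teichf p t"
  unfolding teich_def
proof (rule the_equality)
  show "teichf p t \<in> Zp p \<and> zp_pow p (teichf p t) (nat p) = teichf p t \<and> teichf p t 1 = t mod p"
    by (rule teichf_prop[OF assms])
next
  fix w assume "w \<in> Zp p \<and> zp_pow p w (nat p) = w \<and> w 1 = t mod p"
  then show "w = teichf p t" using teichf_unique[OF assms] by blast
qed

lemma Ddisc_iff:
  fixes p t :: int assumes "prime p"
  shows "x \<in> Ddisc p t \<longleftrightarrow> x \<in> Zp p \<and> x 1 = t mod p"
proof -
  have p1: "p > 1" using assms prime_gt_1_int by blast
  define D where "D = zp_diff p x (teich p t)"
  have T1: "teich p t 1 = t mod p" using teichf_prop[OF assms] teich_eq[OF assms] by simp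
  have D1: "D 1 = (x 1 - t mod p) mod p" unfolding D_def zp_diff_def using T1 by simp
  have "zp_abs p D < 1 \<longleftrightarrow> D 1 = 0"
  proof
    assume a: "zp_abs p D < 1"
    show "D 1 = 0"
    proof (rule ccontr)
      assume "D 1 \<noteq> 0"
      then have "(LEAST k. D (Suc k) \<noteq> 0) = 0" by (simp add: Least_eq_0)
      moreover have "\<not> (\<forall>k. D k = 0)" using \<open>D 1 \<noteq> 0\<close> by blast
      ultimately have "zp_abs p D = 1" unfolding zp_abs_def by simp
      then show False using a by simp
    qed
  next
    assume a: "D 1 = 0"
    show "zp_abs p D < 1"
    proof (cases "\<forall>k. D k = 0")
      case True then show ?thesis unfolding zp_abs_def by simp
    next
      case False
      then obtain k where "D k \<noteq> 0" by blast
      then have k0: "k \<noteq> 0" unfolding D_def zp_diff_def by (cases k) auto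
      then obtain k' where "k = Suc k'" using not0_implies_Suc by blast
      then have ex: "\<exists>k. D (Suc k) \<noteq> 0" using \<open>D k \<noteq> 0\<close> by blast
      define L where "L = (LEAST k. D (Suc k) \<noteq> 0)"
      have "D (Suc L) \<noteq> 0" unfolding L_def by (rule LeastI_ex[OF ex])
      have "L \<noteq> 0"
      proof
        assume "L = 0"
        then show False using \<open>D (Suc L) \<noteq> 0\<close> a by simp
      qed
      then have "real_of_int p ^ L > 1" using p1 by (simp add: one_less_power)
      then show ?thesis using False unfolding zp_abs_def L_def[symmetric] by simp
    qed
  qed
  moreover have "x \<in> Zp p \<Longrightarrow> D 1 = 0 \<longleftrightarrow> x 1 = t mod p"
  proof -
    assume "x \<in> Zp p"
    then have r: "0 \<le> x 1 \<and> x 1 < p" using Zp_range[of x p 1] by simp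
    have "D 1 = 0 \<longleftrightarrow> [x 1 = t mod p] (mod p)" unfolding D1 cong_iff_dvd_diff
      by (simp add: dvd_eq_mod_eq_0)
    also have "\<dots> \<longleftrightarrow> x 1 = t mod p" using r p1 unfolding cong_def by auto
    finally show ?thesis .
  qed
  ultimately show ?thesis unfolding Ddisc_def D_def by auto
qed

lemma levels_unique:
  fixes p :: int
  assumes p1: "p > 1"
    and ex: "\<And>k. \<exists>r. 0 \<le> r \<and> r < p ^ k \<and> P k r"
    and un: "\<And>k r r'. 0 \<le> r \<Longrightarrow> r < p ^ k \<Longrightarrow> P k r \<Longrightarrow> 0 \<le> r' \<Longrightarrow> r' < p ^ k \<Longrightarrow> P k r' \<Longrightarrow> r = r'"
    and compat: "\<And>k r. P (Suc k) r \<Longrightarrow> P k (r mod p ^ k)"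
  shows "\<exists>!z. z \<in> Zp p \<and> (\<forall>k. P k (z k))"
proof -
  define z where "z = (\<lambda>k. THE r. 0 \<le> r \<and> r < p ^ k \<and> P k r)"
  have zk: "0 \<le> z k \<and> z k < p ^ k \<and> P k (z k)" for k
  proof -
    obtain r where r: "0 \<le> r \<and> r < p ^ k \<and> P k r" using ex by blast
    have "\<exists>!r. 0 \<le> r \<and> r < p ^ k \<and> P k r"
    proof (rule ex1I[of _ r])
      show "0 \<le> r \<and> r < p ^ k \<and> P k r" using r .
      fix r' assume "0 \<le> r' \<and> r' < p ^ k \<and> P k r'"
      then show "r' = r" using un[of r' k r] r by simp
    qed
    then show ?thesis unfolding z_def by (rule theI')
  qed
  have zc: "z (Suc k) mod p ^ k = z k" for k
  proof -
    have pk: "p ^ k > 0" using p1 by simp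
    show ?thesis
      by (rule un[of _ k]) (use zk[of k] zk[of "Suc k"] compat pk in auto)
  qed
  have Z: "z \<in> Zp p \<and> (\<forall>k. P k (z k))" using zk zc unfolding Zp_def by auto
  moreover have "y = z" if "y \<in> Zp p \<and> (\<forall>k. P k (y k))" for y
  proof
    fix k
    show "y k = z k" using un[of "y k" k "z k"] zk[of k] Zp_range[of y p k] that by auto
  qed
  ultimately show ?thesis by blast
qed

lemma p_not_dvd_2:
  fixes p :: int assumes "prime p" "odd p" shows "\<not> p dvd 2"
proof
  assume "p dvd 2"
  then have "p \<le> 2" using zdvd_imp_le by simp
  moreover have "p \<ge> 2" using prime_ge_2_int assms(1) by blast
  ultimately have "p = 2" by simp
  then show False using assms(2) by simp
qed

lemma hensel_sqrt:
  fixes p \<beta> X :: int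
  assumes "prime p" "odd p" "\<not> p dvd \<beta>" "[X = \<beta>^2] (mod p)"
  shows "\<exists>r. [r = \<beta>] (mod p) \<and> [r * r = X] (mod p ^ Suc k)"
proof (induction k)
  case 0
  have "[\<beta> * \<beta> = X] (mod p)" using assms(4) by (simp add: power2_eq_square cong_sym)
  then show ?case by (intro exI[of _ \<beta>]) simp
next
  case (Suc k)
  then obtain r where r1: "[r = \<beta>] (mod p)" and r2: "[r * r = X] (mod p ^ Suc k)" by blast
  define P where "P = p ^ Suc k"
  obtain c where c: "r * r - X = P * c" using r2 unfolding P_def cong_iff_dvd_diff dvd_def by blast
  have "\<not> p dvd r" using r1 assms(3) cong_dvd_iff by blast
  then have "\<not> p dvd (2 * r)" using p_not_dvd_2[OF assms(1,2)] assms(1) prime_dvd_mult_iff by blast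
  then have "coprime p (2 * r)" using assms(1) prime_imp_coprime by blast
  then have "coprime (2 * r) p" by (simp add: coprime_commute)
  then obtain u where u: "[2 * r * u = 1] (mod p)" using cong_solve_coprime_int by blast
  obtain e where e: "2 * r * u - 1 = p * e" using u unfolding cong_iff_dvd_diff dvd_def by blast
  define r' where "r' = r + P * (- c * u)"
  have "r' * r' - X = P * p * (- c * e + p ^ k * c^2 * u^2)"
  proof -
    have X: "X = r * r - P * c" using c by simp
    have Pp: "P = p * p ^ k" unfolding P_def by simp
    have "P * p * (- c * e + p ^ k * c^2 * u^2) = P * (- c * (p * e)) + P * (p * p ^ k) * c^2 * u^2"
      by (simp add: algebra_simps)
    also have "\<dots> = P * (- c * (2 * r * u - 1)) + P * P * c^2 * u^2" using e Pp by simp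
    also have "\<dots> = r' * r' - X" unfolding r'_def X by (simp add: algebra_simps power2_eq_square)
    finally show ?thesis by simp
  qed
  then have "P * p dvd r' * r' - X" by simp
  then have s2: "[r' * r' = X] (mod p ^ Suc (Suc k))" unfolding P_def cong_iff_dvd_diff
    by (simp add: mult.commute)
  have "[r' = r] (mod p)" unfolding r'_def P_def cong_iff_dvd_diff by simp
  then have "[r' = \<beta>] (mod p)" using r1 by (rule cong_trans)
  then show ?case using s2 by blast
qed

definition sqP :: "int \<Rightarrow> int \<Rightarrow> (nat \<Rightarrow> int) \<Rightarrow> nat \<Rightarrow> int \<Rightarrow> bool" where
  "sqP p \<beta> x k r \<longleftrightarrow> (k = 0 \<or> [r = \<beta>] (mod p)) \<and> (r * r) mod p ^ k = x k"

lemma sqrt_unique_ex: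
  fixes p \<beta> :: int
  assumes "prime p" "odd p" "\<not> p dvd \<beta>" "x \<in> Zp p" "x 1 = \<beta>^2 mod p"
  shows "\<exists>!z. z \<in> Zp p \<and> (\<forall>k. sqP p \<beta> x k (z k))"
proof (rule levels_unique)
  show p1: "p > 1" using assms prime_gt_1_int by blast
  fix k
  show "\<exists>r. 0 \<le> r \<and> r < p ^ k \<and> sqP p \<beta> x k r"
  proof (cases k)
    case 0
    then show ?thesis using Zp_range[OF assms(4), of 0] unfolding sqP_def by auto
  next
    case (Suc k')
    have "[x k = x 1] (mod p)" using Zp_cong_p[OF assms(4)] p1 Suc by simp
    then have "[x k = \<beta>^2] (mod p)" using assms(5) unfolding cong_def by simp
    then obtain r0 where r0: "[r0 = \<beta>] (mod p)" "[r0 * r0 = x k] (mod p ^ Suc k')"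
      using hensel_sqrt[OF assms(1-3)] by blast
    define r where "r = r0 mod p ^ k"
    have "0 \<le> r \<and> r < p ^ k" unfolding r_def using p1 by simp
    moreover have "[r = \<beta>] (mod p)"
    proof -
      have "p dvd p ^ k" using Suc by simp
      have "[r = r0] (mod p ^ k)" unfolding r_def by simp
      then have "[r = r0] (mod p)" using \<open>p dvd p ^ k\<close> by (rule cong_dvd_modulus)
      then show ?thesis using r0(1) by (rule cong_trans)
    qed
    moreover have "(r * r) mod p ^ k = x k"
    proof -
      have "(r * r) mod p ^ k = (r0 * r0) mod p ^ k" unfolding r_def by (simp add: mod_mult_eq)
      also have "\<dots> = x k mod p ^ k" using r0(2) Suc unfolding cong_def by simp
      also have "\<dots> = x k" using Zp_range[OF assms(4), of k] by simp
      finally show ?thesis .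
    qed
    ultimately show ?thesis unfolding sqP_def by blast
  qed
next
  fix k r r'
  assume a: "0 \<le> r" "r < p ^ k" "sqP p \<beta> x k r" "0 \<le> r'" "r' < p ^ k" "sqP p \<beta> x k r'"
  show "r = r'"
  proof (cases "k = 0")
    case True then show ?thesis using a by simp
  next
    case False
    have c1: "[r = \<beta>] (mod p)" "[r' = \<beta>] (mod p)" using a False unfolding sqP_def by auto
    have "[r * r = r' * r'] (mod p ^ k)" using a unfolding sqP_def cong_def by simp
    then have d: "p ^ k dvd (r - r') * (r + r')" unfolding cong_iff_dvd_diff
      by (simp add: algebra_simps)
    have "[r + r' = 2 * \<beta>] (mod p)" using cong_add[OF c1] by simp
    moreover have "\<not> p dvd 2 * \<beta>" using p_not_dvd_2[OF assms(1,2)] assms(1,3) prime_dvd_mult_iff by blast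
    ultimately have "\<not> p dvd (r + r')" using cong_dvd_iff by blast
    then have "coprime p (r + r')" using assms(1) prime_imp_coprime by blast
    then have "coprime (p ^ k) (r + r')" by simp
    then have "p ^ k dvd (r - r')" using d coprime_dvd_mult_left_iff by blast
    then have "[r = r'] (mod p ^ k)" unfolding cong_iff_dvd_diff .
    then show ?thesis using a cong_less_imp_eq_int by blast
  qed
next
  fix k r
  assume a: "sqP p \<beta> x (Suc k) r"
  have p1: "p > 1" using assms prime_gt_1_int by blast
  have d: "p ^ k dvd p ^ Suc k" by (simp add: le_imp_power_dvd)
  have "k = 0 \<or> [r mod p ^ k = \<beta>] (mod p)"
  proof (cases "k = 0")
    case False
    have "p dvd p ^ k" using False by simp
    have "[r mod p ^ k = r] (mod p ^ k)" by simp
    then have "[r mod p ^ k = r] (mod p)" using \<open>p dvd p ^ k\<close> by (rule cong_dvd_modulus)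
    moreover have "[r = \<beta>] (mod p)" using a unfolding sqP_def by simp
    ultimately have "[r mod p ^ k = \<beta>] (mod p)" by (rule cong_trans)
    then show ?thesis by simp
  qed simp
  moreover have "((r mod p ^ k) * (r mod p ^ k)) mod p ^ k = x k"
  proof -
    have "((r mod p ^ k) * (r mod p ^ k)) mod p ^ k = (r * r) mod p ^ k" by (simp add: mod_mult_eq)
    also have "\<dots> = ((r * r) mod p ^ Suc k) mod p ^ k" using d by (simp add: mod_mod_cancel)
    also have "\<dots> = x (Suc k) mod p ^ k" using a unfolding sqP_def by simp
    also have "\<dots> = x k" using assms(4) unfolding Zp_def by simp
    finally show ?thesis .
  qed
  ultimately show "sqP p \<beta> x k (r mod p ^ k)" unfolding sqP_def by blast
qed

lemma sqrt_props:
  fixes p \<beta> :: int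
  assumes "prime p" "odd p" "\<not> p dvd \<beta>" "x \<in> Ddisc p (\<beta>^2)"
  shows "zp_sqrt p \<beta> x \<in> Zp p \<and> (\<forall>k. sqP p \<beta> x k (zp_sqrt p \<beta> x k))"
proof -
  have p1: "p > 1" using assms prime_gt_1_int by blast
  have x: "x \<in> Zp p" "x 1 = \<beta>^2 mod p" using assms(4) Ddisc_iff[OF assms(1)] by auto
  have eqv: "(y \<in> Ddisc p \<beta> \<and> zp_mult p y y = x) \<longleftrightarrow> (y \<in> Zp p \<and> (\<forall>k. sqP p \<beta> x k (y k)))" for y
  proof -
    have m: "zp_mult p y y = x \<longleftrightarrow> (\<forall>k. (y k * y k) mod p ^ k = x k)"
      unfolding zp_mult_def fun_eq_iff by simp
    have "y \<in> Zp p \<Longrightarrow> y 1 = \<beta> mod p \<longleftrightarrow> (\<forall>k. k = 0 \<or> [y k = \<beta>] (mod p))"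
    proof
      assume yy: "y \<in> Zp p" "y 1 = \<beta> mod p"
      show "\<forall>k. k = 0 \<or> [y k = \<beta>] (mod p)"
      proof (intro allI)
        fix k show "k = 0 \<or> [y k = \<beta>] (mod p)"
        proof (cases "k = 0")
          case False
          then have "[y k = y 1] (mod p)" using Zp_cong_p[of y p k] yy p1 by simp
          then show ?thesis using yy unfolding cong_def by simp
        qed simp
      qed
    next
      assume "y \<in> Zp p" "\<forall>k. k = 0 \<or> [y k = \<beta>] (mod p)"
      then have "[y 1 = \<beta>] (mod p)" by auto
      moreover have "y 1 mod p = y 1" using Zp_range[OF \<open>y \<in> Zp p\<close>, of 1] by simp
      ultimately show "y 1 = \<beta> mod p" unfolding cong_def by simp
    qed
    then show ?thesis unfolding Ddisc_iff[OF assms(1)] m sqP_def by blast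
  qed
  have "\<exists>!z. z \<in> Zp p \<and> (\<forall>k. sqP p \<beta> x k (z k))" by (rule sqrt_unique_ex[OF assms(1-3) x])
  then have "\<exists>!y. y \<in> Ddisc p \<beta> \<and> zp_mult p y y = x" using eqv by simp
  then have "zp_sqrt p \<beta> x \<in> Ddisc p \<beta> \<and> zp_mult p (zp_sqrt p \<beta> x) (zp_sqrt p \<beta> x) = x"
    unfolding zp_sqrt_def by (rule theI')
  then show ?thesis using eqv by blast
qed

definition invP :: "int \<Rightarrow> (nat \<Rightarrow> int) \<Rightarrow> nat \<Rightarrow> int \<Rightarrow> bool" where
  "invP p y k r \<longleftrightarrow> (y k * r) mod p ^ k = 1 mod p ^ k"

lemma inv_props:
  fixes p :: int
  assumes "prime p" "y \<in> Zp p" "\<And>k. k \<noteq> 0 \<Longrightarrow> \<not> p dvd y k"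
  shows "zp_inv p y \<in> Zp p \<and> (\<forall>k. [y k * zp_inv p y k = 1] (mod p ^ k))"
proof -
  have p1: "p > 1" using assms prime_gt_1_int by blast
  have cop: "coprime (y k) (p ^ k)" for k
  proof (cases "k = 0")
    case False
    then have "coprime p (y k)" using assms(1,3) prime_imp_coprime by blast
    then show ?thesis by (simp add: coprime_commute)
  qed simp
  have U: "\<exists>!z. z \<in> Zp p \<and> (\<forall>k. invP p y k (z k))"
  proof (rule levels_unique[OF p1])
    fix k
    obtain u where u: "[y k * u = 1] (mod p ^ k)" using cong_solve_coprime_int cop by blast
    have "invP p y k (u mod p ^ k)" using u unfolding invP_def cong_def by (simp add: mod_mult_right_eq)
    moreover have "0 \<le> u mod p ^ k \<and> u mod p ^ k < p ^ k" using p1 by simp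
    ultimately show "\<exists>r. 0 \<le> r \<and> r < p ^ k \<and> invP p y k r" by blast
  next
    fix k r r'
    assume a: "0 \<le> r" "r < p ^ k" "invP p y k r" "0 \<le> r'" "r' < p ^ k" "invP p y k r'"
    have "[y k * r = y k * r'] (mod p ^ k)" using a unfolding invP_def cong_def by simp
    then have "[r = r'] (mod p ^ k)" using cong_mult_lcancel cop by blast
    then show "r = r'" using a cong_less_imp_eq_int by blast
  next
    fix k r
    assume a: "invP p y (Suc k) r"
    have d: "p ^ k dvd p ^ Suc k" by (simp add: le_imp_power_dvd)
    have e1: "y k = y (Suc k) mod p ^ k" using assms(2) unfolding Zp_def by simp
    have "(y k * (r mod p ^ k)) mod p ^ k = (y (Suc k) mod p ^ k * (r mod p ^ k)) mod p ^ k"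
      using e1 by simp
    also have "\<dots> = (y (Suc k) * r) mod p ^ k" by (simp add: mod_mult_eq)
    also have "\<dots> = ((y (Suc k) * r) mod p ^ Suc k) mod p ^ k" using d by (simp add: mod_mod_cancel)
    also have "\<dots> = (1 mod p ^ Suc k) mod p ^ k" using a unfolding invP_def by simp
    also have "\<dots> = 1 mod p ^ k" using d by (simp add: mod_mod_cancel)
    finally show "invP p y k (r mod p ^ k)" unfolding invP_def .
  qed
  have eqv: "(z \<in> Zp p \<and> zp_mult p y z = zp_of_int p 1) \<longleftrightarrow> (z \<in> Zp p \<and> (\<forall>k. invP p y k (z k)))" for z
    unfolding zp_mult_def zp_of_int_def invP_def fun_eq_iff by simp
  have "\<exists>!z. z \<in> Zp p \<and> zp_mult p y z = zp_of_int p 1" using U eqv by simp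
  then have "zp_inv p y \<in> Zp p \<and> zp_mult p y (zp_inv p y) = zp_of_int p 1"
    unfolding zp_inv_def by (rule theI')
  then have "zp_inv p y \<in> Zp p \<and> (\<forall>k. invP p y k (zp_inv p y k))" using eqv by blast
  then show ?thesis unfolding invP_def cong_def by simp
qed

lemma x1_part:
  fixes p \<beta> X Y I T :: int and N :: nat
  assumes "prime p" "k \<le> s" "[Y = \<beta>] (mod p)" "[Y * I = 1] (mod p ^ k)"
    "[T = \<beta> ^ (nat p ^ k)] (mod p ^ k)" "[X = Y * Y] (mod p ^ k)" "2 * N + 1 = nat p ^ s"
  shows "[X ^ N = T * I] (mod p ^ k)"
proof -
  have dk: "p ^ k dvd p ^ Suc s" by (simp add: le_imp_power_dvd assms(2) le_SucI)
  have dk2: "p ^ k dvd p ^ Suc k" by (simp add: le_imp_power_dvd)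
  have a1: "[Y ^ (nat p ^ s) = \<beta> ^ (nat p ^ s)] (mod p ^ k)"
    using cong_dvd_modulus[OF pow_lift[OF assms(1,3)] dk] .
  have a2: "[\<beta> ^ (nat p ^ s) = \<beta> ^ (nat p ^ k)] (mod p ^ k)"
    using cong_dvd_modulus[OF teich_iter2[OF assms(1,2)] dk2] .
  have a3: "[Y ^ (2 * N) * Y = T] (mod p ^ k)"
  proof -
    have e: "Y ^ (2 * N) * Y = Y ^ (nat p ^ s)"
    proof -
      have h: "Suc (2 * N) = nat p ^ s" using assms(7) by simp
      have "Y ^ (2 * N) * Y = Y ^ Suc (2 * N)" by (simp only: power_Suc2)
      then show ?thesis unfolding h .
    qed
    have "[Y ^ (nat p ^ s) = T] (mod p ^ k)"
      using cong_trans[OF cong_trans[OF a1 a2] cong_sym[OF assms(5)]] .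
    then show ?thesis unfolding e .
  qed
  have c1: "[Y ^ (2 * N) * (Y * I) = T * I] (mod p ^ k)"
    using cong_scalar_right[OF a3, of I] by (simp add: mult.assoc)
  have c2: "[Y ^ (2 * N) * (Y * I) = Y ^ (2 * N)] (mod p ^ k)"
    using cong_scalar_left[OF assms(4), of "Y ^ (2 * N)"] by simp
  have b: "[Y ^ (2 * N) = T * I] (mod p ^ k)" using cong_trans[OF cong_sym[OF c2] c1] .
  have c3: "[X ^ N = (Y * Y) ^ N] (mod p ^ k)" using assms(6) by (rule cong_pow)
  have "(Y * Y) ^ N = Y ^ (2 * N)" by (simp add: power_mult power2_eq_square)
  then show ?thesis using cong_trans[OF c3] b by simp
qed

definition pint :: "int \<Rightarrow> rat \<Rightarrow> bool" where
  "pint p r \<longleftrightarrow> (\<exists>a b. b \<noteq> 0 \<and> coprime b p \<and> r = of_int a / of_int b)"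

lemma pint_of_int: "pint p (of_int a)"
  unfolding pint_def by (rule exI[of _ a], rule exI[of _ 1]) simp

lemma pint_of_nat: "pint p (of_nat a)"
  using pint_of_int[of p "int a"] by simp

lemma pint_add: assumes "pint p r" "pint p s" shows "pint p (r + s)"
proof -
  obtain a b where ab: "b \<noteq> 0" "coprime b p" "r = of_int a / of_int b" using assms(1) unfolding pint_def by blast
  obtain c d where cd: "d \<noteq> 0" "coprime d p" "s = of_int c / of_int d" using assms(2) unfolding pint_def by blast
  have "r + s = of_int (a * d + c * b) / of_int (b * d)" using ab cd by (simp add: field_simps)
  moreover have "b * d \<noteq> 0" "coprime (b * d) p" using ab cd by auto
  ultimately show ?thesis unfolding pint_def by blast
qed

lemma pint_mult: assumes "pint p r" "pint p s" shows "pint p (r * s)"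
proof -
  obtain a b where ab: "b \<noteq> 0" "coprime b p" "r = of_int a / of_int b" using assms(1) unfolding pint_def by blast
  obtain c d where cd: "d \<noteq> 0" "coprime d p" "s = of_int c / of_int d" using assms(2) unfolding pint_def by blast
  have "r * s = of_int (a * c) / of_int (b * d)" using ab cd by (simp add: field_simps)
  moreover have "b * d \<noteq> 0" "coprime (b * d) p" using ab cd by auto
  ultimately show ?thesis unfolding pint_def by blast
qed

lemma pint_minus: assumes "pint p r" shows "pint p (- r)"
  using pint_mult[OF pint_of_int[of p "-1"] assms] by simp

lemma pint_diff: assumes "pint p r" "pint p s" shows "pint p (r - s)"
  using pint_add[OF assms(1) pint_minus[OF assms(2)]] by simp

lemma pint_prod: "finite I \<Longrightarrow> (\<And>i. i \<in> I \<Longrightarrow> pint p (f i)) \<Longrightarrow> pint p (\<Prod>i\<in>I. f i)"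
proof (induction I rule: finite_induct)
  case empty
  then show ?case using pint_of_int[of p 1] by simp
next
  case (insert x F)
  then show ?case by (simp add: pint_mult)
qed

lemma pint_half: assumes "prime p" "odd p" shows "pint p (1/2)"
proof -
  have "\<not> p dvd 2" using p_not_dvd_2[OF assms] .
  then have "coprime p 2" using assms(1) prime_imp_coprime by blast
  then have "coprime 2 p" by (simp add: coprime_commute)
  then show ?thesis unfolding pint_def by (intro exI[of _ 1] exI[of _ 2]) simp
qed

lemma zp_of_rat_char:
  fixes p a b :: int
  assumes "prime p" "b \<noteq> 0" "coprime b p" "r = of_int a / of_int b"
  shows "0 \<le> zp_of_rat p r k \<and> zp_of_rat p r k < p ^ k \<and> [zp_of_rat p r k * b = a] (mod p ^ k)"
proof -
  have p1: "p > 1" using assms prime_gt_1_int by blast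
  obtain N D where q: "quotient_of r = (N, D)" by (cases "quotient_of r") auto
  have D0: "D > 0" using quotient_of_denom_pos[OF q] .
  have cND: "coprime N D" using quotient_of_coprime[OF q] .
  have rND: "r = of_int N / of_int D" using quotient_of_div[OF q] .
  have "of_int N / of_int D = (of_int a / of_int b :: rat)" using rND assms(4) by simp
  then have "of_int N * of_int b = (of_int a * of_int D :: rat)" using D0 assms(2)
    by (simp add: frac_eq_eq)
  then have Nb: "N * b = a * D" by (metis of_int_eq_iff of_int_mult)
  have "D dvd N * b" using Nb by simp
  then have "D dvd b" using cND by (simp add: coprime_commute coprime_dvd_mult_right_iff)
  have "\<not> p dvd D"
  proof
    assume "p dvd D"
    then have "p dvd b" using \<open>D dvd b\<close> by (rule dvd_trans)
    then have "p dvd gcd b p" by simp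
    then show False using assms(1,3) prime_gt_1_int[OF assms(1)] by simp
  qed
  then have "coprime p D" using assms(1) prime_imp_coprime by blast
  then have cD: "coprime D (p ^ k)" by (simp add: coprime_commute)
  have cb: "coprime b (p ^ k)" using assms(3) by simp
  have U: "\<exists>!c. 0 \<le> c \<and> c < p ^ k \<and> [c * D = N] (mod p ^ k)"
  proof -
    obtain v where v: "[D * v = 1] (mod p ^ k)" using cong_solve_coprime_int[OF cD] by blast
    define c where "c = (N * v) mod p ^ k"
    have "[c * D = (N * v) * D] (mod p ^ k)" unfolding c_def cong_def by (simp add: mod_mult_left_eq)
    then have "[c * D = N * (D * v)] (mod p ^ k)" by (simp add: ac_simps)
    moreover have "[N * (D * v) = N * 1] (mod p ^ k)" using v by (rule cong_scalar_left)
    ultimately have c1: "[c * D = N] (mod p ^ k)" using cong_trans by fastforce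
    have c0: "0 \<le> c \<and> c < p ^ k" unfolding c_def using p1 by simp
    show ?thesis
    proof (rule ex1I[of _ c])
      show "0 \<le> c \<and> c < p ^ k \<and> [c * D = N] (mod p ^ k)" using c0 c1 by blast
      fix c' assume a: "0 \<le> c' \<and> c' < p ^ k \<and> [c' * D = N] (mod p ^ k)"
      then have "[c' * D = c * D] (mod p ^ k)" using c1 by (meson cong_sym cong_trans)
      then have "[c' = c] (mod p ^ k)" using cong_mult_rcancel[OF cD] by blast
      then show "c' = c" using a c0 cong_less_imp_eq_int by blast
    qed
  qed
  define C where "C = zp_of_rat p r k"
  have "0 \<le> C \<and> C < p ^ k \<and> [C * D = N] (mod p ^ k)"
    unfolding C_def zp_of_rat_def q using theI'[OF U] by simp
  then have C: "0 \<le> C" "C < p ^ k" "[C * D = N] (mod p ^ k)" by auto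
  have "[C * D * b = N * b] (mod p ^ k)" using C(3) by (rule cong_scalar_right)
  then have "[(C * b) * D = a * D] (mod p ^ k)" using Nb by (simp add: mult.commute mult.left_commute)
  then have "[C * b = a] (mod p ^ k)" using cong_mult_rcancel[OF cD] by blast
  then show ?thesis using C unfolding C_def by blast
qed

lemma zp_of_rat_eq:
  fixes p :: int
  assumes "prime p" "pint p r'" "pint p q" "r = r' + of_int (p ^ k) * q"
  shows "zp_of_rat p r k = zp_of_rat p r' k"
proof -
  obtain a b where ab: "b \<noteq> 0" "coprime b p" "r' = of_int a / of_int b" using assms(2) unfolding pint_def by blast
  obtain c d where cd: "d \<noteq> 0" "coprime d p" "q = of_int c / of_int d" using assms(3) unfolding pint_def by blast
  have rr: "r = of_int (a * d + p ^ k * c * b) / of_int (b * d)"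
    unfolding assms(4) ab(3) cd(3) using ab(1) cd(1) by (simp add: field_simps)
  have bd: "b * d \<noteq> 0" "coprime (b * d) p" using ab cd by auto
  have cbd: "coprime (b * d) (p ^ k)" using bd by simp
  define C where "C = zp_of_rat p r k"
  define C' where "C' = zp_of_rat p r' k"
  have h1: "0 \<le> C \<and> C < p ^ k \<and> [C * (b * d) = a * d + p ^ k * c * b] (mod p ^ k)"
    unfolding C_def by (rule zp_of_rat_char[OF assms(1) bd rr])
  have h2: "0 \<le> C' \<and> C' < p ^ k \<and> [C' * b = a] (mod p ^ k)"
    unfolding C'_def by (rule zp_of_rat_char[OF assms(1) ab])
  have "[a * d + p ^ k * c * b = a * d] (mod p ^ k)" unfolding cong_iff_dvd_diff by simp
  then have e1: "[C * (b * d) = a * d] (mod p ^ k)" using h1 cong_trans by blast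
  have "[C' * b * d = a * d] (mod p ^ k)" using h2 cong_scalar_right by blast
  then have e2: "[C' * (b * d) = a * d] (mod p ^ k)" by (simp add: mult.assoc)
  have "[C * (b * d) = C' * (b * d)] (mod p ^ k)" using e1 e2 by (meson cong_sym cong_trans)
  then have "[C = C'] (mod p ^ k)" using cong_mult_rcancel[OF cbd] by blast
  then show ?thesis using h1 h2 cong_less_imp_eq_int unfolding C_def C'_def by blast
qed

definition rc :: "int \<Rightarrow> nat \<Rightarrow> rat \<Rightarrow> rat \<Rightarrow> bool" where
  "rc p k r r' \<longleftrightarrow> (\<exists>q. pint p q \<and> r = r' + of_int (p ^ k) * q)"

lemma rc_pint: "rc p k r r' \<Longrightarrow> pint p r \<Longrightarrow> pint p r'"
proof -
  assume "rc p k r r'" "pint p r"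
  then obtain q where q: "pint p q" "r = r' + of_int (p ^ k) * q" unfolding rc_def by blast
  then have e: "r' = r - of_int (p ^ k) * q" by simp
  show ?thesis unfolding e by (rule pint_diff[OF \<open>pint p r\<close> pint_mult[OF pint_of_int q(1)]])
qed

lemma rc_mult:
  assumes "rc p k r r'" "rc p k s s'" "pint p r" "pint p s"
  shows "rc p k (r * s) (r' * s')"
proof -
  obtain q where q: "pint p q" "r = r' + of_int (p ^ k) * q" using assms(1) unfolding rc_def by blast
  obtain q' where q': "pint p q'" "s = s' + of_int (p ^ k) * q'" using assms(2) unfolding rc_def by blast
  have pr: "pint p r'" using rc_pint[OF assms(1,3)] .
  have ps: "pint p s'" using rc_pint[OF assms(2,4)] .
  define W where "W = q * s' + r' * q' + of_int (p ^ k) * q * q'"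
  have "pint p W" unfolding W_def
    by (rule pint_add[OF pint_add[OF pint_mult[OF q(1) ps] pint_mult[OF pr q'(1)]] pint_mult[OF pint_mult[OF pint_of_int q(1)] q'(1)]])
  moreover have "r * s = r' * s' + of_int (p ^ k) * W" unfolding W_def q q' by (simp add: algebra_simps)
  ultimately show ?thesis unfolding rc_def by blast
qed

lemma rc_prod:
  "finite I \<Longrightarrow> (\<And>i. i \<in> I \<Longrightarrow> rc p k (f i) (g i) \<and> pint p (f i)) \<Longrightarrow> rc p k (\<Prod>i\<in>I. f i) (\<Prod>i\<in>I. g i)"
proof (induction I rule: finite_induct)
  case empty
  then show ?case unfolding rc_def using pint_of_int[of p 0] by (intro exI[of _ 0]) simp
next
  case (insert x F)
  have "rc p k (f x * (\<Prod>i\<in>F. f i)) (g x * (\<Prod>i\<in>F. g i))"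
    by (rule rc_mult) (use insert pint_prod[of F p f] in auto)
  then show ?case using insert by simp
qed

lemma prod_diff_factor:
  assumes "pint p a" "pint p b"
  shows "\<exists>W. pint p W \<and> (\<Prod>i=0..<m. a - of_nat i) = (\<Prod>i=0..<m. b - of_nat i) + (a - b) * W"
proof (induction m)
  case 0
  then show ?case using pint_of_int[of p 0] by (intro exI[of _ 0]) simp
next
  case (Suc m)
  then obtain W where W: "pint p W" "(\<Prod>i=0..<m. a - of_nat i) = (\<Prod>i=0..<m. b - of_nat i) + (a - b) * W"
    by blast
  define B where "B = (\<Prod>i=0..<m. b - of_nat i)"
  have pB: "pint p B" unfolding B_def using assms(2)
    by (intro pint_prod) (auto intro: pint_diff pint_of_nat)
  define W' where "W' = B + W * (a - of_nat m)"
  have "pint p W'" unfolding W'_def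
    by (rule pint_add[OF pB pint_mult[OF W(1) pint_diff[OF assms(1) pint_of_nat]]])
  moreover have "(\<Prod>i=0..<Suc m. a - of_nat i) = (\<Prod>i=0..<Suc m. b - of_nat i) + (a - b) * W'"
  proof -
    have e1: "(\<Prod>i=0..<Suc m. a - of_nat i) = (\<Prod>i=0..<m. a - of_nat i) * (a - of_nat m)" by simp
    have e2: "(\<Prod>i=0..<Suc m. b - of_nat i) = B * (b - of_nat m)" unfolding B_def by simp
    have e3: "(B + (a - b) * W) * (a - of_nat m) = B * (b - of_nat m) + (a - b) * (B + W * (a - of_nat m))"
      by (simp add: algebra_simps)
    show ?thesis unfolding e1 e2 W(2) B_def[symmetric] W'_def using e3 .
  qed
  ultimately show ?case by blast
qed

lemma gchoose_rc:
  fixes p u :: int and a b w :: rat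
  assumes "prime p" "pint p a" "pint p b" "pint p w" "a - b = of_int (p ^ s) * w"
    "(fact M :: rat) = of_int (p ^ V) * of_int u" "u \<noteq> 0" "coprime u p" "m \<le> M" "k + V \<le> s"
  shows "rc p k (a gchoose m) (b gchoose m)"
proof -
  obtain W where W: "pint p W" "(\<Prod>i=0..<m. a - of_nat i) = (\<Prod>i=0..<m. b - of_nat i) + (a - b) * W"
    using prod_diff_factor[OF assms(2,3)] by blast
  obtain Z :: nat where Z: "fact M = fact m * Z" using fact_dvd[OF assms(9)] by (auto elim: dvdE)
  have Zr: "(fact M :: rat) = fact m * of_nat Z" using arg_cong[OF Z, of "of_nat :: nat \<Rightarrow> rat"] by simp
  have fm0: "(fact m :: rat) \<noteq> 0" by simp
  have Z0: "(of_nat Z :: rat) \<noteq> 0" using Zr by (metis fact_nonzero mult_zero_right)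
  have ps: "(of_int (p ^ s) :: rat) = of_int (p ^ k) * of_int (p ^ (s - k - V)) * of_int (p ^ V)"
  proof -
    have "s = k + (s - k - V) + V" using assms(10) by simp
    then have "p ^ s = p ^ k * p ^ (s - k - V) * p ^ V" by (metis power_add)
    then show ?thesis by (metis of_int_mult)
  qed
  define q where "q = of_int (p ^ (s - k - V)) * w * W * of_nat Z / of_int u"
  have "pint p q"
  proof -
    have "pint p (of_int (p ^ (s - k - V)) * w * W * of_nat Z)"
      by (rule pint_mult[OF pint_mult[OF pint_mult[OF pint_of_int assms(4)] W(1)] pint_of_nat])
    moreover have "pint p (1 / of_int u)" unfolding pint_def using assms(7,8)
      by (intro exI[of _ 1] exI[of _ u]) simp
    ultimately show ?thesis unfolding q_def using pint_mult by fastforce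
  qed
  moreover have "a gchoose m = (b gchoose m) + of_int (p ^ k) * q"
  proof -
    have "a gchoose m = (\<Prod>i=0..<m. a - of_nat i) / fact m" by (simp add: gbinomial_prod_rev)
    also have "\<dots> = (\<Prod>i=0..<m. b - of_nat i) / fact m + (a - b) * W / fact m"
      using W(2) by (simp add: add_divide_distrib)
    also have "(\<Prod>i=0..<m. b - of_nat i) / fact m = b gchoose m" by (simp add: gbinomial_prod_rev)
    also have "(a - b) * W / fact m = of_int (p ^ k) * q"
    proof -
      have p0: "p \<noteq> 0" using prime_gt_1_int[OF assms(1)] by simp
      have pu: "of_int (p ^ V) * of_int u \<noteq> (0::rat)" using assms(1,7) prime_gt_1_int[OF assms(1)] by simp
      have "(a - b) * W / fact m = (a - b) * W * of_nat Z / (fact m * of_nat Z)" using Z0 fm0 by simp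
      also have "\<dots> = (a - b) * W * of_nat Z / (of_int (p ^ V) * of_int u)" using Zr assms(6) by simp
      also have "\<dots> = of_int (p ^ k) * q" unfolding assms(5) ps q_def using pu assms(7) p0
        by (simp add: field_simps)
      finally show ?thesis .
    qed
    finally show ?thesis .
  qed
  ultimately show ?thesis unfolding rc_def by blast
qed

lemma Qcoef_eq:
  fixes p u :: int and N M V :: nat
  assumes "prime p" "odd p" "N \<ge> 1" "2 * N + 1 = nat p ^ s"
    "(fact M :: rat) = of_int (p ^ V) * of_int u" "u \<noteq> 0" "coprime u p" "k + V \<le> s"
    "\<forall>i. a i \<le> M"
  shows "zp_of_rat p (Qcoef n (of_nat N) j a) k = zp_of_rat p (Qcoef n (- 1/2) j a) k"
proof -
  have p1: "p > 1" using assms prime_gt_1_int by blast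
  have ph: "pint p (1/2)" using pint_half[OF assms(1,2)] .
  have pmh: "pint p (- 1/2)" using pint_minus[OF ph] by simp
  have pmh1: "pint p (- 1/2 - 1)" using pint_diff[OF pmh pint_of_int[of p 1]] by simp
  have ps: "(of_nat (2 * N + 1) :: rat) = of_int (p ^ s)"
  proof -
    have "(of_nat (2 * N + 1) :: rat) = of_nat (nat p ^ s)" using assms(4) by simp
    also have "\<dots> = of_int (int (nat p ^ s))" by simp
    also have "int (nat p ^ s) = p ^ s" using p1 by simp
    finally show ?thesis .
  qed
  have d1: "(of_nat N :: rat) - (- 1/2) = of_int (p ^ s) * (1/2)"
    unfolding ps[symmetric] by simp
  have d2: "(of_nat (N - 1) :: rat) - (- 1/2 - 1) = of_int (p ^ s) * (1/2)"
    unfolding ps[symmetric] using assms(3) by (simp add: of_nat_diff)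
  have N1: "(of_nat N :: rat) - 1 = of_nat (N - 1)" using assms(3) by (simp add: of_nat_diff)
  have R1: "rc p k (of_nat N gchoose m) ((- 1/2) gchoose m) \<and> pint p (of_nat N gchoose m)" if "m \<le> M" for m
  proof
    show "rc p k (of_nat N gchoose m) ((- 1/2) gchoose m)"
      by (rule gchoose_rc[OF assms(1) pint_of_nat pmh ph d1 assms(5,6,7) that assms(8)])
    show "pint p (of_nat N gchoose m)" using pint_of_nat[of p "N choose m"] by (simp add: binomial_gbinomial)
  qed
  have R2: "rc p k ((of_nat N - 1) gchoose m) ((- 1/2 - 1) gchoose m) \<and> pint p ((of_nat N - 1) gchoose m)" if "m \<le> M" for m
  proof
    show "rc p k ((of_nat N - 1) gchoose m) ((- 1/2 - 1) gchoose m)"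
      unfolding N1 by (rule gchoose_rc[OF assms(1) pint_of_nat pmh1 ph d2 assms(5,6,7) that assms(8)])
    show "pint p ((of_nat N - 1) gchoose m)" unfolding N1
      using pint_of_nat[of p "(N - 1) choose m"] by (simp add: binomial_gbinomial)
  qed
  have P: "rc p k (\<Prod>i\<in>I. of_nat N gchoose a i) (\<Prod>i\<in>I. (- 1/2) gchoose a i)
      \<and> pint p (\<Prod>i\<in>I. of_nat N gchoose a i)" if "finite I" for I
  proof
    show "rc p k (\<Prod>i\<in>I. of_nat N gchoose a i) (\<Prod>i\<in>I. (- 1/2) gchoose a i)"
      by (rule rc_prod[OF that]) (use R1 assms(9) in blast)
    show "pint p (\<Prod>i\<in>I. of_nat N gchoose a i)"
      by (rule pint_prod[OF that]) (use R1 assms(9) in blast)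
  qed
  have main: "rc p k (Qcoef n (of_nat N) j a) (Qcoef n (- 1/2) j a) \<and> pint p (Qcoef n (of_nat N) j a)"
  proof (cases "j \<le> n - 1")
    case True
    have f: "finite ({1..n - 1} - {j})" by simp
    have "rc p k (((of_nat N - 1) gchoose a j) * (\<Prod>i\<in>{1..n - 1} - {j}. of_nat N gchoose a i))
                 (((- 1/2 - 1) gchoose a j) * (\<Prod>i\<in>{1..n - 1} - {j}. (- 1/2) gchoose a i))"
      by (rule rc_mult) (use R2[of "a j"] P[OF f] assms(9) in auto)
    moreover have "pint p (((of_nat N - 1) gchoose a j) * (\<Prod>i\<in>{1..n - 1} - {j}. of_nat N gchoose a i))"
      by (rule pint_mult) (use R2[of "a j"] P[OF f] assms(9) in auto)
    ultimately show ?thesis unfolding Qcoef_def using True by simp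
  next
    case False
    then show ?thesis unfolding Qcoef_def using P[of "{1..n - 1}"] by simp
  qed
  then obtain q where q: "pint p q" "Qcoef n (of_nat N) j a = Qcoef n (- 1/2) j a + of_int (p ^ k) * q"
    unfolding rc_def by blast
  have "pint p (Qcoef n (- 1/2) j a)" using rc_pint main by blast
  then show ?thesis using zp_of_rat_eq[OF assms(1) _ q(1) q(2)] by blast
qed

lemma zp_sum_reduce:
  fixes p :: int
  assumes "finite B" "B \<subseteq> A" "\<forall>a\<in>A - B. f a k = 0"
  shows "zp_sum p f A k = (\<Sum>a\<in>B. f a k) mod p ^ k"
proof -
  define F where "F = {a\<in>A. f a k mod p ^ k \<noteq> 0}"
  have FB: "F \<subseteq> B"
  proof
    fix a assume aF: "a \<in> F"
    show "a \<in> B"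
    proof (rule ccontr)
      assume "a \<notin> B"
      then have "f a k = 0" using assms(3) aF unfolding F_def by auto
      then show False using aF unfolding F_def by simp
    qed
  qed
  have fF: "finite F" using finite_subset[OF FB assms(1)] .
  have "(\<Sum>a\<in>B. f a k) = (\<Sum>a\<in>F. f a k) + (\<Sum>a\<in>B - F. f a k)"
    using sum.subset_diff[OF FB assms(1), of "\<lambda>a. f a k"] by (simp add: add.commute)
  moreover have "p ^ k dvd (\<Sum>a\<in>B - F. f a k)"
  proof (rule dvd_sum)
    fix a assume "a \<in> B - F"
    then have "f a k mod p ^ k = 0" unfolding F_def using assms(2) by auto
    then show "p ^ k dvd f a k" by (simp add: dvd_eq_mod_eq_0)
  qed
  ultimately have "(\<Sum>a\<in>B. f a k) mod p ^ k = (\<Sum>a\<in>F. f a k) mod p ^ k"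
    by (metis dvd_imp_mod_0 mod_add_right_eq add.right_neutral)
  then show ?thesis unfolding zp_sum_def F_def by simp
qed

definition degX :: "nat \<Rightarrow> nat \<Rightarrow> (nat \<Rightarrow> nat) \<Rightarrow> nat" where
  "degX n l a = (\<Sum>i\<in>{2..n - 2*l}. a (i - 1)) + (\<Sum>i\<in>{n - 2*l + 1..n - 1}. a i)"

lemma Xmon_zero:
  fixes p :: int
  assumes "p > 1" "\<forall>i\<in>{2..n - 1}. p dvd x i k" "k \<le> degX n l a" "1 \<le> l" "1 \<le> n - 2*l"
  shows "Xmon p n l a x k = 0"
proof -
  define I1 where "I1 = {2..n - 2*l}"
  define I2 where "I2 = {n - 2*l + 1..n - 1}"
  have s1: "I1 \<subseteq> {2..n - 1}" unfolding I1_def using assms(4) by auto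
  have s2: "I2 \<subseteq> {2..n - 1}" unfolding I2_def using assms(5) by auto
  define R1 where "R1 = (\<Prod>i\<in>I1. x i k ^ a (i - 1))"
  define R2 where "R2 = (\<Prod>i\<in>I2. x i k ^ a i)"
  have e: "Xmon p n l a x k = (R1 * R2) mod p ^ k"
    unfolding Xmon_def zp_mult_def zp_prod_def zp_pow_def R1_def R2_def I1_def[symmetric] I2_def[symmetric]
    by (simp add: mod_prod_eq mod_mult_eq)
  have d1: "p ^ (\<Sum>i\<in>I1. a (i - 1)) dvd R1"
    unfolding R1_def power_sum
    by (rule prod_dvd_prod) (use assms(2) s1 in \<open>auto intro: dvd_power_same\<close>)
  have d2: "p ^ (\<Sum>i\<in>I2. a i) dvd R2"
    unfolding R2_def power_sum
    by (rule prod_dvd_prod) (use assms(2) s2 in \<open>auto intro: dvd_power_same\<close>)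
  have "p ^ degX n l a dvd R1 * R2"
    unfolding degX_def I1_def[symmetric] I2_def[symmetric] power_add
    by (rule mult_dvd_mono[OF d1 d2])
  moreover have "p ^ k dvd p ^ degX n l a" using assms(3) by (simp add: le_imp_power_dvd)
  ultimately have "p ^ k dvd R1 * R2" by (rule dvd_trans[rotated])
  then show ?thesis unfolding e by simp
qed

lemma deg_large:
  assumes "a \<in> Qidx n l j" "a i > k + l" "1 \<le> n - 2*l"
  shows "k \<le> degX n l a"
proof -
  have i: "i \<in> {1..n - 1}" using assms(1,2) unfolding Qidx_def by (cases "i \<in> {1..n - 1}") auto
  have eq: "(\<Sum>i=1..n - 2*l. a i) = (\<Sum>i=n - 2*l + 1..n - 1. a i) + (if j \<le> n - 2*l then l - 1 else l)"
    using assms(1) unfolding Qidx_def by blast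
  consider "i < n - 2*l" | "i = n - 2*l" | "i > n - 2*l" by linarith
  then show ?thesis
  proof cases
    case 1
    have "i + 1 \<in> {2..n - 2*l}" using i 1 by auto
    then have "a (i + 1 - 1) \<le> (\<Sum>i\<in>{2..n - 2*l}. a (i - 1))" by (intro member_le_sum) auto
    then show ?thesis unfolding degX_def using assms(2) by simp
  next
    case 2
    have "i \<in> {1..n - 2*l}" using 2 assms(3) by auto
    then have "a i \<le> (\<Sum>i=1..n - 2*l. a i)" by (intro member_le_sum) auto
    moreover have "(if j \<le> n - 2*l then l - 1 else l) \<le> l" by auto
    ultimately have "a i \<le> (\<Sum>i=n - 2*l + 1..n - 1. a i) + l" using eq by linarith
    then show ?thesis unfolding degX_def using assms(2) by simp
  next
    case 3
    have "i \<in> {n - 2*l + 1..n - 1}" using i 3 by auto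
    then have "a i \<le> (\<Sum>i=n - 2*l + 1..n - 1. a i)" by (intro member_le_sum) auto
    then show ?thesis unfolding degX_def using assms(2) by simp
  qed
qed

lemma finite_B: "finite {a \<in> Qidx n l j. \<forall>i. a i \<le> M}"
proof -
  have "{a \<in> Qidx n l j. \<forall>i. a i \<le> M} \<subseteq>
        {f. \<forall>x. (x \<in> {1..n - 1} \<longrightarrow> f x \<in> {0..M}) \<and> (x \<notin> {1..n - 1} \<longrightarrow> f x = 0)}"
    unfolding Qidx_def by auto
  moreover have "finite {f. \<forall>x. (x \<in> {1..n - 1} \<longrightarrow> f x \<in> {0..M}) \<and> (x \<notin> {1..n - 1} \<longrightarrow> f x = (0::nat))}"
    by (rule finite_set_of_finite_funs) auto
  ultimately show ?thesis by (rule finite_subset)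
qed

lemma N_facts:
  fixes p :: int
  assumes "prime p" "odd p"
  shows "2 * nat ((p ^ s - 1) div 2) + 1 = nat p ^ s
     \<and> int (nat ((p ^ s - 1) div 2)) = (p ^ s - 1) div 2
     \<and> s \<le> 2 * nat ((p ^ s - 1) div 2) + 1"
proof -
  have p1: "p > 1" using assms prime_gt_1_int by blast
  have od: "odd (p ^ s)" using assms(2) by simp
  have ps1: "p ^ s \<ge> 1" using p1 by simp
  have nn: "(p ^ s - 1) div 2 \<ge> 0" using ps1 by simp
  have i1: "int (nat ((p ^ s - 1) div 2)) = (p ^ s - 1) div 2" using nn by simp
  have "even (p ^ s - 1)" using od by simp
  then have "2 * ((p ^ s - 1) div 2) = p ^ s - 1" by (rule even_two_times_div_two)
  then have "2 * ((p ^ s - 1) div 2) + 1 = p ^ s" by simp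

  then have "int (2 * nat ((p ^ s - 1) div 2) + 1) = int (nat p ^ s)" using i1 p1 by simp
  then have e: "2 * nat ((p ^ s - 1) div 2) + 1 = nat p ^ s" by (rule of_nat_eq_iff[THEN iffD1])
  have "s < 2 ^ s" by (rule less_exp)
  moreover have "(2::nat) ^ s \<le> nat p ^ s" using p1 by (intro power_mono) auto
  ultimately have "s < nat p ^ s" by (rule less_le_trans)
  then have "s \<le> nat p ^ s" by simp
  then show ?thesis using e i1 by simp
qed

lemma Q_level:
  fixes p :: int
  assumes "prime p" "odd p" "1 \<le> l" "1 \<le> n - 2*l"
  shows "\<exists>S. \<forall>s\<ge>S. \<forall>x. (\<forall>i\<in>{2..n - 1}. p dvd x i k) \<longrightarrow> Qls p n l s j x k = Ql p n l j x k"
proof -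
  have p1: "p > 1" using assms prime_gt_1_int by blast
  define M where "M = k + l"
  have f0: "(fact M :: int) \<noteq> 0" by simp
  have nu: "\<not> is_unit p" using assms(1) prime_gt_1_int[OF assms(1)] by simp
  obtain u where u: "(fact M :: int) = p ^ multiplicity p (fact M :: int) * u" "\<not> p dvd u"
    using multiplicity_decompose'[OF f0 nu] by blast
  define V where "V = multiplicity p (fact M :: int)"
  have fM: "(fact M :: int) = p ^ V * u" unfolding V_def by (rule u(1))
  have u0: "u \<noteq> 0" using fM f0 by (metis mult_zero_right)
  have cu: "coprime u p" using assms(1) u(2) prime_imp_coprime coprime_commute by blast
  have fr: "(fact M :: rat) = of_int (p ^ V) * of_int u"
  proof -
    have "(fact M :: rat) = of_int (fact M :: int)" by simp
    also have "\<dots> = of_int (p ^ V * u)" by (simp only: fM)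
    also have "\<dots> = of_int (p ^ V) * of_int u" by (rule of_int_mult)
    finally show ?thesis .
  qed
  show ?thesis
  proof (intro exI[of _ "k + V + 2 * M + 3"] allI impI)
    fix s x
    assume s: "k + V + 2 * M + 3 \<le> s" and dx: "\<forall>i\<in>{2..n - 1}. p dvd x i k"
    define N where "N = nat ((p ^ s - 1) div 2)"
    have NF: "2 * N + 1 = nat p ^ s" "int N = (p ^ s - 1) div 2" "s \<le> 2 * N + 1"
      using N_facts[OF assms(1,2), of s] unfolding N_def by auto
    have NM: "M \<le> N" "1 \<le> N" using NF(3) s by auto
    have mu: "(of_int ((p ^ s - 1) div 2) :: rat) = of_nat N"
      using arg_cong[OF NF(2), of "of_int :: int \<Rightarrow> rat"] by simp
    define A where "A = {a::nat\<Rightarrow>nat. \<forall>i. a i \<le> nat ((p ^ s - 1) div 2)}"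
    define B where "B = {a \<in> Qidx n l j. \<forall>i. a i \<le> M}"
    define f1 where "f1 = (\<lambda>a. zp_mult p (zp_of_rat p (Qcoef n (of_int ((p ^ s - 1) div 2)) j a)) (Xmon p n l a x))"
    define f2 where "f2 = (\<lambda>a. zp_mult p (zp_of_rat p (Qcoef n (- 1/2) j a)) (Xmon p n l a x))"
    have fB: "finite B" unfolding B_def by (rule finite_B)
    have X0: "Xmon p n l a x k = 0" if h: "a \<in> Qidx n l j" "a \<notin> B" for a
    proof -
      obtain i where "\<not> a i \<le> M" using h unfolding B_def by blast
      then have "a i > k + l" unfolding M_def by simp
      then have "k \<le> degX n l a" using deg_large[OF h(1) _ assms(4)] by blast
      then show ?thesis using Xmon_zero p1 dx assms(3,4) by blast
    qed
    have s1: "zp_sum p f1 (Qidx n l j \<inter> A) k = (\<Sum>a\<in>B. f1 a k) mod p ^ k"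
    proof (rule zp_sum_reduce[OF fB])
      show "B \<subseteq> Qidx n l j \<inter> A" unfolding B_def A_def N_def[symmetric] using NM by (auto intro: le_trans)
      show "\<forall>a\<in>Qidx n l j \<inter> A - B. f1 a k = 0"
      proof
        fix a assume "a \<in> Qidx n l j \<inter> A - B"
        then have "Xmon p n l a x k = 0" using X0 by blast
        then show "f1 a k = 0" unfolding f1_def zp_mult_def by (simp only: mult_zero_right mod_0)
      qed
    qed
    have s2: "zp_sum p f2 (Qidx n l j \<inter> UNIV) k = (\<Sum>a\<in>B. f2 a k) mod p ^ k"
    proof (rule zp_sum_reduce[OF fB])
      show "B \<subseteq> Qidx n l j \<inter> UNIV" unfolding B_def by auto
      show "\<forall>a\<in>Qidx n l j \<inter> UNIV - B. f2 a k = 0"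
      proof
        fix a assume "a \<in> Qidx n l j \<inter> UNIV - B"
        then have "Xmon p n l a x k = 0" using X0 by blast
        then show "f2 a k = 0" unfolding f2_def zp_mult_def by (simp only: mult_zero_right mod_0)
      qed
    qed
    have s3: "(\<Sum>a\<in>B. f1 a k) = (\<Sum>a\<in>B. f2 a k)"
    proof (rule sum.cong)
      fix a assume "a \<in> B"
      then have aM: "\<forall>i. a i \<le> M" unfolding B_def by blast
      have eq: "zp_of_rat p (Qcoef n (of_nat N) j a) k = zp_of_rat p (Qcoef n (- 1/2) j a) k"
        by (rule Qcoef_eq[OF assms(1,2) NM(2) NF(1) fr u0 cu _ aM]) (use s in simp)
      show "f1 a k = f2 a k" unfolding f1_def f2_def zp_mult_def mu eq ..
    qed simp
    have eqs: "zp_sum p f1 (Qidx n l j \<inter> A) k = zp_sum p f2 (Qidx n l j \<inter> UNIV) k"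
      unfolding s1 s2 s3 ..
    show "Qls p n l s j x k = Ql p n l j x k"
      unfolding Qls_def Ql_def Qcomp_def f1_def[symmetric] f2_def[symmetric] A_def[symmetric]
      unfolding zp_mult_def eqs ..
  qed
qed

lemma combine_levels:
  fixes K :: nat and P :: "nat \<Rightarrow> nat \<Rightarrow> bool"
  assumes "\<And>k. \<exists>S. \<forall>s\<ge>S. P k s"
  shows "\<exists>N. \<forall>s\<ge>N. \<forall>k\<le>K. P k s"
proof (induction K)
  case 0
  obtain S where S: "\<forall>s\<ge>S. P 0 s" using assms by blast
  show ?case
  proof (intro exI[of _ S] allI impI)
    fix s k :: nat assume "S \<le> s" "k \<le> 0"
    then show "P k s" using S by simp
  qed
next
  case (Suc K)
  then obtain N where N: "\<forall>s\<ge>N. \<forall>k\<le>K. P k s" by blast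
  obtain S where S: "\<forall>s\<ge>S. P (Suc K) s" using assms by blast
  show ?case
  proof (intro exI[of _ "max N S"] allI impI)
    fix s k :: nat assume a: "max N S \<le> s" "k \<le> Suc K"
    show "P k s"
    proof (cases "k = Suc K")
      case True then show ?thesis using S a(1) by simp
    next
      case False then have "k \<le> K" using a(2) by simp
      then show ?thesis using N a(1) by simp
    qed
  qed
qed

lemma abs_small:
  fixes p :: int
  assumes "p > 1" "\<forall>k\<le>K. D k = 0"
  shows "zp_abs p D \<le> 1 / real_of_int p ^ K"
proof (cases "\<forall>k. D k = 0")
  case True
  then show ?thesis unfolding zp_abs_def using assms(1) by simp
next
  case False
  then obtain k where "D k \<noteq> 0" by blast
  then have "k > K" using assms(2) by (meson not_le)
  then obtain k' where "k = Suc k'" by (cases k) auto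
  then have ex: "\<exists>k. D (Suc k) \<noteq> 0" using \<open>D k \<noteq> 0\<close> by blast
  define L where "L = (LEAST k. D (Suc k) \<noteq> 0)"
  have "D (Suc L) \<noteq> 0" unfolding L_def by (rule LeastI_ex[OF ex])
  then have "Suc L > K" using assms(2) by (meson not_le)
  then have "K \<le> L" by simp
  then have "real_of_int p ^ K \<le> real_of_int p ^ L" using assms(1) by (intro power_increasing) auto
  moreover have "real_of_int p ^ K > 0" using assms(1) by simp
  ultimately have "1 / real_of_int p ^ L \<le> 1 / real_of_int p ^ K" by (intro divide_left_mono) auto
  moreover have "zp_abs p D = 1 / real_of_int p ^ L" using False by (auto simp: zp_abs_def L_def)
  ultimately show ?thesis by simp
qed

lemma level_eq:
  fixes p :: int and g n l :: nat and \<beta> :: int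
  assumes pr: "prime p" and od: "odd p" and "g \<ge> 1" and nd: "n = 2*g + 1"
    and l1: "1 \<le> l" and lg: "l \<le> g" and nb: "\<not> p dvd \<beta>"
  shows "\<exists>S. \<forall>s\<ge>S. \<forall>x\<in>{x. x 1 \<in> Ddisc p (\<beta>^2) \<and> (\<forall>i\<in>{2..n - 1}. x i \<in> Ddisc p 0)}.
           Jls p n l s j x k = zp_mult p (teich p \<beta>) (Jl p \<beta> n l j x) k"
proof -
  have p1: "p > 1" using pr prime_gt_1_int by blast
  have n2l: "1 \<le> n - 2*l" using nd lg by simp
  obtain S0 where S0: "\<forall>s\<ge>S0. \<forall>x. (\<forall>i\<in>{2..n - 1}. p dvd x i k) \<longrightarrow> Qls p n l s j x k = Ql p n l j x k"
    using Q_level[OF pr od l1 n2l] by blast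
  show ?thesis
  proof (intro exI[of _ "max S0 k"] allI impI ballI)
    fix s x
    assume s: "max S0 k \<le> s" and x: "x \<in> {x. x 1 \<in> Ddisc p (\<beta>^2) \<and> (\<forall>i\<in>{2..n - 1}. x i \<in> Ddisc p 0)}"
    have x1: "x 1 \<in> Ddisc p (\<beta>^2)" using x by blast
    have x1Z: "x 1 \<in> Zp p" using x1 Ddisc_iff[OF pr] by blast
    have dx: "\<forall>i\<in>{2..n - 1}. p dvd x i k"
    proof
      fix i assume i: "i \<in> {2..n - 1}"
      then have xi: "x i \<in> Zp p" "x i 1 = 0" using x Ddisc_iff[OF pr] by auto
      show "p dvd x i k"
      proof (cases "k = 0")
        case True
        have "x i 0 = 0" using Zp_range[OF xi(1), of 0] by simp
        then show ?thesis using True by simp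
      next
        case False
        then have "[x i k = x i 1] (mod p)" using Zp_cong_p[OF xi(1)] p1 by simp
        then show ?thesis using xi(2) by (simp add: cong_0_iff)
      qed
    qed
    have "S0 \<le> s" using s by simp
    then have Q: "Qls p n l s j x k = Ql p n l j x k" using S0 dx by blast
    show "Jls p n l s j x k = zp_mult p (teich p \<beta>) (Jl p \<beta> n l j x) k"
    proof (cases "k = 0")
      case True
      show ?thesis unfolding True Jls_def zp_mult_def power_0 mod_by_1 ..
    next
      case False
      define Y where "Y = zp_sqrt p \<beta> (x 1)"
      have YP: "Y \<in> Zp p" "\<And>k. sqP p \<beta> (x 1) k (Y k)"
        using sqrt_props[OF pr od nb x1] unfolding Y_def by blast+
      have Yb: "[Y k = \<beta>] (mod p)" using YP(2)[of k] False unfolding sqP_def by auto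
      have Ynd: "\<not> p dvd Y k'" if "k' \<noteq> 0" for k'
      proof -
        have "[Y k' = \<beta>] (mod p)" using YP(2)[of k'] that unfolding sqP_def by auto
        then show ?thesis using nb cong_dvd_iff by blast
      qed
      define I where "I = zp_inv p Y"
      have IP: "[Y k * I k = 1] (mod p ^ k)" using inv_props[OF pr YP(1) Ynd] unfolding I_def by blast
      define T where "T = teich p \<beta>"
      have TP: "[T k = \<beta> ^ (nat p ^ k)] (mod p ^ k)" unfolding T_def teich_eq[OF pr] teichf_def
        by simp
      define N where "N = nat ((p ^ s - 1) div 2)"
      have NF: "2 * N + 1 = nat p ^ s" using N_facts[OF pr od, of s] unfolding N_def by blast
      have XY: "[x 1 k = Y k * Y k] (mod p ^ k)"
      proof -
        have "(Y k * Y k) mod p ^ k = x 1 k" using YP(2)[of k] unfolding sqP_def by blast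
        moreover have "x 1 k mod p ^ k = x 1 k" using Zp_range[OF x1Z, of k] by simp
        ultimately show ?thesis unfolding cong_def by simp
      qed
      have ks: "k \<le> s" using s by simp
      have main: "[x 1 k ^ N = T k * I k] (mod p ^ k)"
        by (rule x1_part[OF pr ks Yb IP TP XY NF])
      define Qv where "Qv = Ql p n l j x k"
      have L: "Jls p n l s j x k = (x 1 k ^ N * Qv) mod p ^ k"
        unfolding Jls_def zp_mult_def zp_pow_def N_def[symmetric] Q Qv_def by (simp add: mod_mult_left_eq)
      have R: "zp_mult p (teich p \<beta>) (Jl p \<beta> n l j x) k = (T k * (I k * Qv)) mod p ^ k"
        unfolding Jl_def zp_mult_def T_def[symmetric] I_def Y_def[symmetric] Qv_def
        by (simp add: mod_mult_right_eq)
      have "[x 1 k ^ N * Qv = T k * (I k * Qv)] (mod p ^ k)"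
        using cong_scalar_right[OF main, of Qv] by (simp add: mult.assoc)
      then show ?thesis unfolding L R cong_def .
    qed
  qed
qed

theorem theorem10p5:
  fixes p :: int and g n l :: nat and \<beta> :: int
  assumes "prime p" and "odd p" and "g \<ge> 1" and "n = 2*g + 1" and "p > int n"
    and "1 \<le> l" and "l \<le> g"
    and "\<not> p dvd \<beta>"
  shows "\<forall>j\<in>{1..n}. zp_unif_conv p
           (\<lambda>s x. Jls p n l s j x)
           (\<lambda>x. zp_mult p (teich p \<beta>) (Jl p \<beta> n l j x))
           {x. x 1 \<in> Ddisc p (\<beta>^2) \<and> (\<forall>i\<in>{2..n - 1}. x i \<in> Ddisc p 0)}"
proof
  fix j assume "j \<in> {1..n}"
  define SS where "SS = {x. x 1 \<in> Ddisc p (\<beta>^2) \<and> (\<forall>i\<in>{2..n - 1}. x i \<in> Ddisc p 0)}"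
  have p1: "p > 1" using assms(1) prime_gt_1_int by blast
  define P where "P = (\<lambda>k s. \<forall>x\<in>SS. Jls p n l s j x k = zp_mult p (teich p \<beta>) (Jl p \<beta> n l j x) k)"
  have LP: "\<exists>S. \<forall>s\<ge>S. P k s" for k
    unfolding P_def SS_def by (rule level_eq[where j=j and k=k, OF assms(1-4,6,7,8)])
  show "zp_unif_conv p (\<lambda>s x. Jls p n l s j x) (\<lambda>x. zp_mult p (teich p \<beta>) (Jl p \<beta> n l j x)) SS"
    unfolding zp_unif_conv_def
  proof (intro allI impI)
    fix \<epsilon> :: real assume e: "\<epsilon> > 0"
    have rp: "real_of_int p > 1" using p1 by simp
    from real_arch_pow[OF rp, of "1 / \<epsilon>"] obtain K where K: "1 / \<epsilon> < real_of_int p ^ K" ..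
    have pK: "real_of_int p ^ K > 0" using p1 by simp
    have "\<epsilon> * (1 / \<epsilon>) < \<epsilon> * real_of_int p ^ K" using mult_strict_left_mono[OF K e] .
    then have "1 < \<epsilon> * real_of_int p ^ K" using e by simp
    then have Ke: "1 / real_of_int p ^ K < \<epsilon>" by (simp only: pos_divide_less_eq[OF pK])
    from combine_levels[where P=P and K=K, OF LP] obtain N where N: "\<forall>s\<ge>N. \<forall>k\<le>K. P k s" ..
    show "\<exists>N. \<forall>s\<ge>N. \<forall>x\<in>SS. zp_abs p (zp_diff p (Jls p n l s j x) (zp_mult p (teich p \<beta>) (Jl p \<beta> n l j x))) < \<epsilon>"
    proof (intro exI[of _ N] allI impI ballI)
      fix s x assume s: "N \<le> s" and x: "x \<in> SS"
      have "\<forall>k\<le>K. zp_diff p (Jls p n l s j x) (zp_mult p (teich p \<beta>) (Jl p \<beta> n l j x)) k = 0"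
      proof (intro allI impI)
        fix k assume "k \<le> K"
        then have "P k s" using N s by blast
        then have "\<forall>x\<in>SS. Jls p n l s j x k = zp_mult p (teich p \<beta>) (Jl p \<beta> n l j x) k"
          by (simp only: P_def)
        then have "Jls p n l s j x k = zp_mult p (teich p \<beta>) (Jl p \<beta> n l j x) k" using x by (rule bspec)
        then show "zp_diff p (Jls p n l s j x) (zp_mult p (teich p \<beta>) (Jl p \<beta> n l j x)) k = 0"
          unfolding zp_diff_def by simp
      qed
      then have "zp_abs p (zp_diff p (Jls p n l s j x) (zp_mult p (teich p \<beta>) (Jl p \<beta> n l j x))) \<le> 1 / real_of_int p ^ K"
        by (rule abs_small[OF p1])
      then show "zp_abs p (zp_diff p (Jls p n l s j x) (zp_mult p (teich p \<beta>) (Jl p \<beta> n l j x))) < \<epsilon>"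
        using Ke by linarith
    qed
  qed
qed

end
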